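(* Let $\Gamma=(N,A,u)$ be a finite game that admits a correlated equilibrium $p\in\Delta A$ all of whose coordinates are rational numbers. Then there exists a finite set of message profiles $M=\times_{i\in N}M_i$ such that every outcome $\mu\in\Delta A$ with $\mathrm{supp}(\mu)\subseteq\mathrm{supp}(p)$ is implemented by some partially specified data-generating process $\mathcal{D}=(M,\eta,\mathcal{F})$.
   Context: A finite game $\Gamma=(N,A,u)$ has a finite set of players $N$, finite action sets $A_i$, $A=\times_{i\in N}A_i$, and utilities $u_i:A\to\mathbb{R}$ (extended multilinearly to mixed action profiles). A correlated equilibrium is $p\in\Delta A$ such that for all $i$, all $a_i$ with $\sum_{a_{-i}}p_{a_i,a_{-i}}>0$, and all $b\in A_i$: $\sum_{a_{-i}}p_{a_i,a_{-i}}[u_i(a_i,a_{-i})-u_i(b,a_{-i})]\ge 0$. A partially specified data-generating process is a triple $\mathcal{D}=(M,\eta,\mathcal{F})$ with $M=\times_iM_i$ finite, $\eta\in\Delta M$, $\mathcal{F}\subseteq\{f:M\to\mathbb{R}\}$. Let $\Delta_{\mathcal{D}}=\{q\in\Delta M:\sum_mq_mf(m)=\sum_m\eta_mf(m)\ \forall f\in\mathcal{F}\}$; the belief is the unique maximizer $q$ of $\mathcal{H}(q)=-\sum_mq_m\log q_m$ over $\Delta_{\mathcal{D}}$. A strategy profile is $\sigma=(\sigma_i)$, $\sigma_i:M_i\to\Delta A_i$, $\sigma(a\mid m)=\prod_i\sigma_i(a_i\mid m_i)$, and $(\eta\circ\sigma)(a)=\sum_m\eta_m\sigma(a\mid m)$.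 $\mu\in\Delta A$ is implemented by $\mathcal{D}$ if there is $\sigma$ with (i) $q$ the maximum-entropy belief; (ii) for all $i$, all $m_i$ with positive $q$-marginal, all $a_i'\in A_i$: $\sum_{m_{-i}}q_{m_i,m_{-i}}[u_i(\sigma_i(m_i),\sigma_{-i}(m_{-i}))-u_i(a_i',\sigma_{-i}(m_{-i}))]\ge0$; (iii) $\mu=\eta\circ\sigma$. *)

theory Defs
  imports Complex_Main
begin

(* Players are the elements of a finite type 'n; A i is the (finite) action set of
   player i; profiles A is the product set  X_i A_i  (as total functions). *)
definition profiles :: "('n \<Rightarrow> 'a set) \<Rightarrow> ('n \<Rightarrow> 'a) set" where
  "profiles A = {a. \<forall>i. a i \<in> A i}"

definition Delta :: "'b set \<Rightarrow> ('b \<Rightarrow> real) set" where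
  "Delta S = {p. (\<forall>x\<in>S. 0 \<le> p x) \<and> (\<forall>x. x \<notin> S \<longrightarrow> p x = 0) \<and> sum p S = 1}"

(* Multilinear extension of u i to mixed action profiles tau (tau j a = prob. of action a) *)
definition EU :: "('n::finite \<Rightarrow> 'a set) \<Rightarrow> ('n \<Rightarrow> ('n \<Rightarrow> 'a) \<Rightarrow> real) \<Rightarrow> 'n
                  \<Rightarrow> ('n \<Rightarrow> 'a \<Rightarrow> real) \<Rightarrow> real" where
  "EU A u i tau = (\<Sum>a\<in>profiles A. (\<Prod>j\<in>UNIV. tau j (a j)) * u i a)"

definition point_mass :: "'a \<Rightarrow> 'a \<Rightarrow> real" where
  "point_mass b = (\<lambda>x. if x = b then 1 else 0)"

definition correlated_eq :: "('n::finite \<Rightarrow> 'a set) \<Rightarrow> ('n \<Rightarrow> ('n \<Rightarrow> 'a) \<Rightarrow> real)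
                              \<Rightarrow> (('n \<Rightarrow> 'a) \<Rightarrow> real) \<Rightarrow> bool" where
  "correlated_eq A u p \<longleftrightarrow> p \<in> Delta (profiles A) \<and>
     (\<forall>i. \<forall>ai \<in> A i. (\<Sum>a\<in>{a\<in>profiles A. a i = ai}. p a) > 0 \<longrightarrow>
        (\<forall>b\<in>A i. (\<Sum>a\<in>{a\<in>profiles A. a i = ai}. p a * (u i a - u i (a(i := b)))) \<ge> 0))"

definition DeltaD :: "('n \<Rightarrow> 'm set) \<Rightarrow> (('n \<Rightarrow> 'm) \<Rightarrow> real) \<Rightarrow> ((('n \<Rightarrow> 'm) \<Rightarrow> real) set)
                       \<Rightarrow> (('n \<Rightarrow> 'm) \<Rightarrow> real) set" where
  "DeltaD M eta F = {q \<in> Delta (profiles M).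
      \<forall>f\<in>F. (\<Sum>m\<in>profiles M. q m * f m) = (\<Sum>m\<in>profiles M. eta m * f m)}"

definition entropy :: "'b set \<Rightarrow> ('b \<Rightarrow> real) \<Rightarrow> real" where
  "entropy S q = - (\<Sum>m\<in>S. (if q m = 0 then 0 else q m * ln (q m)))"

definition is_maxent_belief :: "('n \<Rightarrow> 'm set) \<Rightarrow> (('n \<Rightarrow> 'm) \<Rightarrow> real) \<Rightarrow> ((('n \<Rightarrow> 'm) \<Rightarrow> real) set)
                       \<Rightarrow> (('n \<Rightarrow> 'm) \<Rightarrow> real) \<Rightarrow> bool" where
  "is_maxent_belief M eta F q \<longleftrightarrow> q \<in> DeltaD M eta F \<and>
     (\<forall>q'\<in>DeltaD M eta F. entropy (profiles M) q' \<le> entropy (profiles M) q) \<and>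
     (\<forall>q'\<in>DeltaD M eta F. entropy (profiles M) q' = entropy (profiles M) q \<longrightarrow> q' = q)"

definition compose :: "('n::finite \<Rightarrow> 'm set) \<Rightarrow> (('n \<Rightarrow> 'm) \<Rightarrow> real)
                        \<Rightarrow> ('n \<Rightarrow> 'm \<Rightarrow> 'a \<Rightarrow> real) \<Rightarrow> ('n \<Rightarrow> 'a) \<Rightarrow> real" where
  "compose M eta sigma a = (\<Sum>m\<in>profiles M. eta m * (\<Prod>i\<in>UNIV. sigma i (m i) (a i)))"

definition implemented :: "('n::finite \<Rightarrow> 'a set) \<Rightarrow> ('n \<Rightarrow> ('n \<Rightarrow> 'a) \<Rightarrow> real)
     \<Rightarrow> ('n \<Rightarrow> 'm set) \<Rightarrow> (('n \<Rightarrow> 'm) \<Rightarrow> real) \<Rightarrow> ((('n \<Rightarrow> 'm) \<Rightarrow> real) set)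
     \<Rightarrow> (('n \<Rightarrow> 'a) \<Rightarrow> real) \<Rightarrow> bool" where
  "implemented A u M eta F mu \<longleftrightarrow>
    (\<exists>sigma :: 'n \<Rightarrow> 'm \<Rightarrow> 'a \<Rightarrow> real. \<exists>q.
       (\<forall>i. \<forall>mi\<in>M i. sigma i mi \<in> Delta (A i)) \<and>
       is_maxent_belief M eta F q \<and>
       (\<forall>i. \<forall>mi\<in>M i. (\<Sum>m\<in>{m\<in>profiles M. m i = mi}. q m) > 0 \<longrightarrow>
          (\<forall>a'\<in>A i. (\<Sum>m\<in>{m\<in>profiles M. m i = mi}.
              q m * (EU A u i (\<lambda>j. sigma j (m j))
                     - EU A u i ((\<lambda>j. sigma j (m j))(i := point_mass a')))) \<ge> 0)) \<and>
       mu = compose M eta sigma)"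

end

theory Submission
  imports Defs "HOL-Library.FuncSet"
begin


lemma profiles_Pi: "profiles B = Pi UNIV B"
  unfolding profiles_def Pi_def by auto

lemma finite_profiles: "(\<And>i. finite (B i)) \<Longrightarrow> finite (profiles (B :: 'n::finite \<Rightarrow> 'b set))"
  unfolding profiles_Pi PiE_UNIV_domain[symmetric] by (rule finite_PiE) auto

lemma prod_point_mass:
  "(\<Prod>j\<in>(UNIV::'n::finite set). point_mass (c j) (a j)) = (if a = c then 1 else 0)"
proof (cases "a = c")
  case True then show ?thesis by (simp add: point_mass_def)
next
  case False
  then obtain j where "a j \<noteq> c j" by auto
  then have "point_mass (c j) (a j) = 0" by (simp add: point_mass_def)
  then show ?thesis using False by (metis finite UNIV_I prod_zero)
qed

lemma EU_point:
  assumes "c \<in> profiles A" and fA: "\<And>i. finite (A i)"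
  shows "EU A u i (\<lambda>j. point_mass (c j)) = u i c"
proof -
  have "EU A u i (\<lambda>j. point_mass (c j)) = (\<Sum>a\<in>profiles A. if a = c then u i a else 0)"
    unfolding EU_def prod_point_mass by (intro sum.cong) auto
  also have "\<dots> = u i c" using assms finite_profiles[of A, OF fA] by (simp add: sum.delta)
  finally show ?thesis .
qed

lemma point_mass_Delta: "finite S \<Longrightarrow> b \<in> S \<Longrightarrow> point_mass b \<in> Delta S"
  unfolding Delta_def point_mass_def by (auto simp: sum.delta')

lemma entropy_term:
  fixes c y :: real
  assumes c: "c > 0" and y: "y \<ge> 0"
  shows "- (if y = 0 then 0 else y * ln y) \<le> c - y - y * ln c"
    and "- (if y = 0 then 0 else y * ln y) = c - y - y * ln c \<Longrightarrow> y = c"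
proof -
  have "- (if y = 0 then 0 else y * ln y) \<le> c - y - y * ln c \<and>
       (- (if y = 0 then 0 else y * ln y) = c - y - y * ln c \<longrightarrow> y = c)"
  proof (cases "y = 0")
    case True then show ?thesis using c by simp
  next
    case False
    then have yp: "y > 0" using y by simp
    have l: "ln (c / y) \<le> c / y - 1" using ln_le_minus_one c yp by simp
    have e: "ln (c/y) = ln c - ln y" using c yp by (simp add: ln_div)
    have "y * ln (c/y) \<le> y * (c/y - 1)" using l yp by (simp add: mult_left_mono)
    then have 1: "y * ln c - y * ln y \<le> c - y" using yp by (simp add: e algebra_simps)
    have 2: "y = c" if h: "- (y * ln y) = c - y - y * ln c"
    proof -
      have "y * ln (c/y) = y * (c/y - 1)" using h yp by (simp add: e algebra_simps)
      then have "ln (c/y) = c/y - 1" using yp by simp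
      then have "c / y = 1" using ln_eq_minus_one[of "c/y"] c yp by simp
      then show ?thesis using yp by simp
    qed
    show ?thesis using False 1 2 by auto
  qed
  then show "- (if y = 0 then 0 else y * ln y) \<le> c - y - y * ln c"
    and "- (if y = 0 then 0 else y * ln y) = c - y - y * ln c \<Longrightarrow> y = c" by auto
qed


definition Eterm :: "real \<Rightarrow> real" where
  "Eterm y = - (if y = 0 then 0 else y * ln y)"

lemma entropy_Eterm: "entropy P f = (\<Sum>m\<in>P. Eterm (f m))"
  unfolding entropy_def Eterm_def by (simp add: sum_negf)

lemma entropy_restrict:
  assumes "finite P" "S \<subseteq> P" "\<forall>m\<in>P - S. f m = 0"
  shows "entropy P f = (\<Sum>m\<in>S. Eterm (f m))"
  unfolding entropy_Eterm using assms
  by (intro sum.mono_neutral_left[symmetric]) (auto simp: Eterm_def)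

lemma maxent_uniform:
  assumes fP: "finite P" and SP: "S \<subseteq> P" and Sne: "S \<noteq> {}"
    and qdef: "q = (\<lambda>m. if m \<in> S then 1 / real (card S) else 0)"
    and q': "q' \<in> Delta P" and z: "\<forall>m\<in>P - S. q' m = 0"
  shows "entropy P q' \<le> entropy P q" and "entropy P q' = entropy P q \<Longrightarrow> q' = q"
proof -
  define c where "c = 1 / real (card S)"
  have fS: "finite S" using fP SP finite_subset by blast
  have cS: "card S > 0" using fS Sne by (simp add: card_gt_0_iff)
  have cp: "c > 0" using cS by (simp add: c_def)
  have q'0: "\<forall>m\<in>P. q' m \<ge> 0" and q'out: "\<forall>m. m \<notin> P \<longrightarrow> q' m = 0" and q'1: "sum q' P = 1"
    using q' by (auto simp: Delta_def)
  have sS: "sum q' S = 1"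
    using q'1 z fP SP by (metis (no_types, lifting) DiffI sum.mono_neutral_right)
  have eq: "entropy P q = - ln c"
  proof -
    have "entropy P q = (\<Sum>m\<in>S. Eterm (q m))"
      using fP SP by (intro entropy_restrict) (auto simp: qdef)
    also have "\<dots> = (\<Sum>m\<in>S. - (c * ln c))"
      using cp by (intro sum.cong) (auto simp: qdef c_def Eterm_def)
    also have "\<dots> = - ln c" using cS by (simp add: c_def)
    finally show ?thesis .
  qed
  have eq': "entropy P q' = (\<Sum>m\<in>S. Eterm (q' m))"
    using fP SP z by (intro entropy_restrict) auto
  have bnd: "(\<Sum>m\<in>S. c - q' m - q' m * ln c) = - ln c"
    using cS sS by (simp add: sum_subtractf sum_distrib_right[symmetric] c_def)
  have le: "\<forall>m\<in>S. Eterm (q' m) \<le> c - q' m - q' m * ln c"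
    using entropy_term(1)[OF cp] q'0 SP unfolding Eterm_def by blast
  show "entropy P q' \<le> entropy P q"
    unfolding eq eq' bnd[symmetric] using le by (intro sum_mono) auto
  assume h: "entropy P q' = entropy P q"
  have "(\<Sum>m\<in>S. (c - q' m - q' m * ln c) - Eterm (q' m)) = 0"
    using h unfolding eq eq' bnd[symmetric] by (simp add: sum_subtractf)
  then have "\<forall>m\<in>S. (c - q' m - q' m * ln c) - Eterm (q' m) = 0"
    using le fS by (subst sum_nonneg_eq_0_iff[symmetric]) auto
  then have "\<forall>m\<in>S. q' m = c"
    using entropy_term(2)[OF cp] q'0 SP unfolding Eterm_def by force
  then show "q' = q"
    using z q'out by (auto simp: qdef c_def fun_eq_iff) 
qed


lemma common_denom:
  fixes p :: "'b \<Rightarrow> real"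
  assumes "finite P" "\<forall>a\<in>P. p a \<in> \<rat> \<and> p a \<ge> 0"
  shows "\<exists>K::nat. K > 0 \<and> (\<exists>k::'b \<Rightarrow> nat. \<forall>a\<in>P. p a = real (k a) / real K)"
  using assms
proof (induction P rule: finite_induct)
  case empty
  then show ?case by (intro exI[of _ 1]) auto
next
  case (insert x F)
  then obtain K k where K: "K > 0" "\<forall>a\<in>F. p a = real (k a) / real K" by auto
  from insert have "p x \<in> \<rat>" "p x \<ge> 0" by auto
  then obtain n d where nd: "d > 0" "p x = of_int n / of_int d" by (metis Rats_cases')
  then have n0: "n \<ge> 0" using \<open>p x \<ge> 0\<close>
    by (metis divide_nonneg_pos not_less of_int_0_less_iff of_int_less_0_iff zero_le_divide_iff le_less_trans)
  define k' where "k' = (\<lambda>a. if a = x then nat n * K else k a * nat d)"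
  have "\<forall>a\<in>insert x F. p a = real (k' a) / real (K * nat d)"
  proof
    fix a assume a: "a \<in> insert x F"
    show "p a = real (k' a) / real (K * nat d)"
    proof (cases "a = x")
      case True then show ?thesis using nd n0 K by (simp add: k'_def)
    next
      case False then have "a \<in> F" using a by auto
      then show ?thesis using K nd False by (simp add: k'_def)
    qed
  qed
  moreover have "K * nat d > 0" using K nd by simp
  ultimately show ?case by blast
qed



lemma mod2K: "(x::nat) < 2 * K \<Longrightarrow> x mod K = (if x < K then x else x - K)"
  by (simp add: le_mod_geq)
lemma mod_solve:
  fixes K s a t :: nat
  assumes "K > 0" "a < K" "t < K"
  shows "(s + a) mod K = t \<longleftrightarrow> a = (t + K - s mod K) mod K"
proof -
  define r where "r = s mod K"
  have r: "r < K" using assms by (simp add: r_def)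
  have "(s + a) mod K = (r + a) mod K" by (simp add: mod_add_left_eq r_def)
  moreover have "(r + a) mod K = (if r + a < K then r + a else r + a - K)"
    using r assms by (intro mod2K) auto
  moreover have "(t + K - r) mod K = (if t + K - r < K then t + K - r else t + K - r - K)"
    using r assms by (intro mod2K) auto
  ultimately show ?thesis using r assms unfolding r_def[symmetric] by auto
qed



locale constr =
  fixes A :: "'n::finite \<Rightarrow> 'a set" and u :: "'n \<Rightarrow> ('n \<Rightarrow> 'a) \<Rightarrow> real"
    and p :: "('n \<Rightarrow> 'a) \<Rightarrow> real" and K :: nat and L :: "('n \<Rightarrow> 'a) list"
  assumes fin: "\<And>i. finite (A i)" and ce: "correlated_eq A u p"
    and Kpos: "K > 0" and lenL: "length L = K" and setL: "set L \<subseteq> profiles A"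
    and posL: "\<And>a. a \<in> set L \<Longrightarrow> p a > 0"
    and suppL: "\<And>a. p a \<noteq> 0 \<Longrightarrow> a \<in> set L"
    and sumL: "\<And>h. (\<Sum>t<K. h (L!t)) = (\<Sum>a\<in>profiles A. real K * p a * h a)"
begin

definition tok where "tok t = L ! (t mod K)"
definition Xs :: "('n \<Rightarrow> nat) set" where "Xs = {x. \<forall>j. x j < K}"
definition tx :: "('n \<Rightarrow> nat) \<Rightarrow> nat" where "tx x = (\<Sum>j\<in>UNIV. x j) mod K"
definition lab where "lab i b = (LEAST s. tok s i = b)"
definition msg where "msg x = (\<lambda>i. x i + K * lab i (tok (tx x) i))"
definition Ss where "Ss = msg ` Xs"
definition Ms :: "'n \<Rightarrow> nat set" where "Ms i = {..<K*K}"
definition dec where "dec i mi = tok (mi div K) i"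
definition act where "act m = (\<lambda>i. dec i (m i))"
definition sig where "sig i mi = point_mass (dec i mi)"
definition qq where "qq m = (if m \<in> Ss then 1 / real (card Ss) else 0)"
definition FF where "FF = {(\<lambda>m'. if m' = m0 then 1 else 0) | m0. m0 \<in> profiles Ms \<and> m0 \<notin> Ss}"
definition eta where
  "eta mu m = (if m \<in> Ss then mu (act m) / real (card {m'\<in>Ss. act m' = act m}) else 0)"

lemma pD: "p \<in> Delta (profiles A)" using ce by (simp add: correlated_eq_def)
lemma p_nonneg: "p a \<ge> 0"
  using pD by (cases "a \<in> profiles A") (auto simp: Delta_def)

lemma tok_L: "tok t \<in> set L"
  unfolding tok_def using lenL Kpos by simp
lemma tok_prof: "tok t \<in> profiles A" using tok_L setL by auto
lemma tok_pos: "p (tok t) > 0" using tok_L posL by auto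
lemma tok_A: "tok t i \<in> A i" using tok_prof by (simp add: profiles_def)

lemma tx_lt: "tx x < K" using Kpos by (simp add: tx_def)
lemma lab_le: "tok s i = b \<Longrightarrow> lab i b \<le> s" unfolding lab_def by (rule Least_le)
lemma lab_tok: "tok (lab i (tok s i)) i = tok s i" unfolding lab_def by (rule LeastI) (rule refl)
lemma lab_lt: "lab i (tok (tx x) i) < K" using lab_le[of "tx x" i "tok (tx x) i"] tx_lt[of x] by simp

lemma msg_mod: "x \<in> Xs \<Longrightarrow> msg x i mod K = x i" by (simp add: msg_def Xs_def)
lemma msg_div: "x \<in> Xs \<Longrightarrow> msg x i div K = lab i (tok (tx x) i)"
  using Kpos by (simp add: msg_def Xs_def)
lemma act_msg: "x \<in> Xs \<Longrightarrow> act (msg x) = tok (tx x)"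
  by (rule ext) (simp add: act_def dec_def msg_div lab_tok)
lemma msg_prof: "x \<in> Xs \<Longrightarrow> msg x \<in> profiles Ms"
proof -
  assume x: "x \<in> Xs"
  { fix i
    have l: "lab i (tok (tx x) i) + 1 \<le> K" using lab_lt[of i x] by simp
    have "x i + K * lab i (tok (tx x) i) < K + K * lab i (tok (tx x) i)" using x by (simp add: Xs_def)
    also have "\<dots> = K * (lab i (tok (tx x) i) + 1)" by simp
    also have "\<dots> \<le> K * K" using l by (intro mult_left_mono) auto
    finally have "msg x i \<in> Ms i" by (simp add: msg_def Ms_def) }
  then show ?thesis by (simp add: profiles_def)
qed
lemma msg_inj: "inj_on msg Xs"
  by (rule inj_onI) (metis ext msg_mod)
lemma finite_Xs: "finite Xs"
proof -
  have "Xs = profiles (\<lambda>_. {..<K})" by (auto simp: Xs_def profiles_def)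
  then show ?thesis using finite_profiles[of "\<lambda>_. {..<K}"] by simp
qed
lemma Xs_ne: "(\<lambda>_. 0) \<in> Xs" using Kpos by (simp add: Xs_def)
lemma finite_Ms: "finite (profiles Ms)" by (rule finite_profiles) (simp add: Ms_def)
lemma Ss_sub: "Ss \<subseteq> profiles Ms" using msg_prof by (auto simp: Ss_def)
lemma finite_Ss: "finite Ss" using finite_Xs by (simp add: Ss_def)
lemma Ss_ne: "Ss \<noteq> {}" using Xs_ne by (auto simp: Ss_def)
lemma act_prof: "act m \<in> profiles A" using tok_A by (simp add: act_def dec_def profiles_def)

end


context constr begin

lemma count_const:
  assumes ji: "j \<noteq> i" and t: "t < K"
  shows "card {x\<in>Xs. x i = v \<and> tx x = t} = card {x\<in>Xs. x i = v \<and> x j = 0}"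
proof -
  define rest where "rest x = (\<Sum>l\<in>UNIV-{j}. x l)" for x :: "'n \<Rightarrow> nat"
  have split: "tx x = (rest x + x j) mod K" for x
    unfolding tx_def rest_def by (simp add: sum.remove[of UNIV j] add.commute)
  have rest_upd: "rest (y(j:=c)) = rest y" for y c
    unfolding rest_def by (intro sum.cong) auto
  define f where "f y = y(j := (t + K - rest y mod K) mod K)" for y
  have "bij_betw f {x\<in>Xs. x i = v \<and> x j = 0} {x\<in>Xs. x i = v \<and> tx x = t}"
  proof (rule bij_betw_byWitness[where f' = "\<lambda>x. x(j:=0)"])
    show "\<forall>a\<in>{x \<in> Xs. x i = v \<and> x j = 0}. (f a)(j := 0) = a"
      by (auto simp: f_def fun_eq_iff)
    show "\<forall>a'\<in>{x \<in> Xs. x i = v \<and> tx x = t}. f (a'(j := 0)) = a'"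
    proof
      fix x assume x: "x \<in> {x \<in> Xs. x i = v \<and> tx x = t}"
      then have "x j < K" "(rest x + x j) mod K = t" using split[of x] by (auto simp: Xs_def)
      then have "x j = (t + K - rest x mod K) mod K" using mod_solve[OF Kpos _ t] by blast
      then show "f (x(j := 0)) = x" by (auto simp: f_def rest_upd fun_eq_iff)
    qed
    show "f ` {x \<in> Xs. x i = v \<and> x j = 0} \<subseteq> {x \<in> Xs. x i = v \<and> tx x = t}"
    proof
      fix z assume "z \<in> f ` {x \<in> Xs. x i = v \<and> x j = 0}"
      then obtain y where y: "y \<in> Xs" "y i = v" "z = f y" by auto
      have c: "(t + K - rest y mod K) mod K < K" using Kpos by simp
      have "(rest y + (t + K - rest y mod K) mod K) mod K = t"
        using mod_solve[OF Kpos c t] by blast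
      then have "tx z = t" using split[of z] y(3) by (simp add: f_def rest_upd)
      moreover have "z \<in> Xs" using y c by (auto simp: f_def Xs_def)
      moreover have "z i = v" using y ji by (simp add: f_def)
      ultimately show "z \<in> {x \<in> Xs. x i = v \<and> tx x = t}" by simp
    qed
    show "(\<lambda>x. x(j := 0)) ` {x \<in> Xs. x i = v \<and> tx x = t} \<subseteq> {x \<in> Xs. x i = v \<and> x j = 0}"
      using ji Kpos by (auto simp: Xs_def)
  qed
  then show ?thesis by (simp add: bij_betw_same_card)
qed

lemma single_nonneg:
  assumes one: "\<forall>j::'n. j = i" and a': "a' \<in> A i"
  shows "u i (tok s) - u i ((tok s)(i := a')) \<ge> 0"
proof -
  have eqset: "{a\<in>profiles A. a i = tok s i} = {tok s}"
  proof -
    have "a = tok s" if "a i = tok s i" for a using that one by (metis ext)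
    then show ?thesis using tok_prof by auto
  qed
  have "(\<Sum>a\<in>{a\<in>profiles A. a i = tok s i}. p a) > 0" using eqset tok_pos by simp
  then have "(\<Sum>a\<in>{a\<in>profiles A. a i = tok s i}. p a * (u i a - u i (a(i := a')))) \<ge> 0"
    using ce tok_A a' unfolding correlated_eq_def by blast
  then have "p (tok s) * (u i (tok s) - u i ((tok s)(i := a'))) \<ge> 0" using eqset by simp
  then show ?thesis using tok_pos[of s] by (simp add: zero_le_mult_iff)
qed

end


context constr begin

lemma EU_diff:
  assumes "a' \<in> A i"
  shows "EU A u i (\<lambda>j. sig j (m j)) - EU A u i ((\<lambda>j. sig j (m j))(i := point_mass a'))
         = u i (act m) - u i ((act m)(i := a'))"
proof -
  have 1: "(\<lambda>j. sig j (m j)) = (\<lambda>j. point_mass (act m j))" by (simp add: sig_def act_def)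
  have 2: "(\<lambda>j. sig j (m j))(i := point_mass a') = (\<lambda>j. point_mass (((act m)(i := a')) j))"
    by (auto simp: sig_def act_def fun_eq_iff)
  have 3: "(act m)(i := a') \<in> profiles A" using act_prof assms by (auto simp: profiles_def)
  have e1: "EU A u i (\<lambda>j. sig j (m j)) = u i (act m)"
    unfolding 1 by (rule EU_point[OF act_prof fin])
  have e2: "EU A u i ((\<lambda>j. sig j (m j))(i := point_mass a')) = u i ((act m)(i := a'))"
    unfolding 2 by (rule EU_point[OF 3 fin])
  show ?thesis by (simp only: e1 e2)
qed

lemma core_nonneg:
  assumes x0: "x0 \<in> Xs" and a': "a' \<in> A i"
  shows "(\<Sum>x\<in>{x\<in>Xs. msg x i = msg x0 i}. u i (tok (tx x)) - u i ((tok (tx x))(i := a'))) \<ge> 0"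
proof (cases "\<forall>j::'n. j = i")
  case True
  then show ?thesis using single_nonneg[OF True a'] by (intro sum_nonneg) auto
next
  case False
  then obtain j where ji: "j \<noteq> i" by auto
  define g where "g a = u i a - u i (a(i := a'))" for a
  define v where "v = x0 i"
  define b where "b = tok (tx x0) i"
  define H where "H t = (if tok t i = b then g (tok t) else 0)" for t
  define Y where "Y = {x\<in>Xs. x i = v}"
  define C where "C = card {x\<in>Xs. x i = v \<and> x j = 0}"
  have fY: "finite Y" using finite_Xs by (simp add: Y_def)
  have seteq: "{x\<in>Xs. msg x i = msg x0 i} = {x\<in>Y. tok (tx x) i = b}"
  proof (intro set_eqI iffI)
    fix x assume "x \<in> {x\<in>Xs. msg x i = msg x0 i}"
    then have x: "x \<in> Xs" "msg x i = msg x0 i" by auto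
    have "x i = v" using msg_mod[OF x(1), of i] msg_mod[OF x0, of i] x(2) by (simp add: v_def)
    moreover have "lab i (tok (tx x) i) = lab i (tok (tx x0) i)"
      using msg_div[OF x(1), of i] msg_div[OF x0, of i] x(2) by simp
    then have "tok (tx x) i = b" by (metis lab_tok b_def)
    ultimately show "x \<in> {x\<in>Y. tok (tx x) i = b}" using x by (simp add: Y_def)
  next
    fix x assume "x \<in> {x\<in>Y. tok (tx x) i = b}"
    then show "x \<in> {x\<in>Xs. msg x i = msg x0 i}" by (auto simp: Y_def msg_def v_def b_def)
  qed
  have "(\<Sum>x\<in>{x\<in>Xs. msg x i = msg x0 i}. g (tok (tx x))) = (\<Sum>x\<in>Y. H (tx x))"
    unfolding seteq H_def using fY by (simp add: sum.inter_filter)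
  also have "\<dots> = (\<Sum>t\<in>{..<K}. \<Sum>x\<in>{x\<in>Y. tx x = t}. H (tx x))"
    using fY tx_lt by (intro sum.group[symmetric]) auto
  also have "\<dots> = (\<Sum>t\<in>{..<K}. real C * H t)"
  proof (intro sum.cong refl)
    fix t assume t: "t \<in> {..<K}"
    have "(\<Sum>x\<in>{x\<in>Y. tx x = t}. H (tx x)) = (\<Sum>x\<in>{x\<in>Y. tx x = t}. H t)" by simp
    also have "\<dots> = real (card {x\<in>Y. tx x = t}) * H t" by simp
    also have "card {x\<in>Y. tx x = t} = C"
      unfolding C_def Y_def using count_const[OF ji, of t v] t by (simp add: conj_assoc)
    finally show "(\<Sum>x\<in>{x\<in>Y. tx x = t}. H (tx x)) = real C * H t" .
  qed
  also have "\<dots> = real C * (\<Sum>t<K. (\<lambda>a. if a i = b then g a else 0) (L ! t))"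
    unfolding sum_distrib_left by (intro sum.cong refl) (simp add: H_def tok_def)
  also have "\<dots> = real C * (\<Sum>a\<in>profiles A. real K * p a * (if a i = b then g a else 0))"
    using sumL[of "\<lambda>a. if a i = b then g a else 0"] by simp
  also have "\<dots> = real C * (real K * (\<Sum>a\<in>{a\<in>profiles A. a i = b}. p a * g a))"
    using finite_profiles[of A, OF fin]
    by (simp add: sum.inter_filter sum_distrib_left mult.assoc if_distrib cong: if_cong)
  finally have eq: "(\<Sum>x\<in>{x\<in>Xs. msg x i = msg x0 i}. g (tok (tx x)))
     = real C * (real K * (\<Sum>a\<in>{a\<in>profiles A. a i = b}. p a * g a))" .
  have bA: "b \<in> A i" using tok_A by (simp add: b_def)
  have "p (tok (tx x0)) \<le> (\<Sum>a\<in>{a\<in>profiles A. a i = b}. p a)"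
    using finite_profiles[of A, OF fin] tok_prof p_nonneg
    by (intro member_le_sum) (auto simp: b_def)
  then have "(\<Sum>a\<in>{a\<in>profiles A. a i = b}. p a) > 0" using tok_pos[of "tx x0"] by simp
  then have "(\<Sum>a\<in>{a\<in>profiles A. a i = b}. p a * g a) \<ge> 0"
    using ce bA a' unfolding correlated_eq_def g_def by blast
  then show ?thesis using eq unfolding g_def by simp
qed

end


context constr begin

lemma obed:
  assumes pos: "(\<Sum>m\<in>{m\<in>profiles Ms. m i = mi}. qq m) > 0" and a': "a' \<in> A i"
  shows "(\<Sum>m\<in>{m\<in>profiles Ms. m i = mi}.
           qq m * (EU A u i (\<lambda>j. sig j (m j)) - EU A u i ((\<lambda>j. sig j (m j))(i := point_mass a')))) \<ge> 0"
proof -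
  define g where "g a = u i a - u i (a(i := a'))" for a
  have "\<exists>m\<in>{m\<in>profiles Ms. m i = mi}. qq m \<noteq> 0"
    using pos by (metis (mono_tags, lifting) less_irrefl sum.neutral)
  then obtain m0 where m0: "m0 \<in> profiles Ms" "m0 i = mi" "qq m0 \<noteq> 0" by auto
  then have "m0 \<in> Ss" by (simp add: qq_def split: if_splits)
  then obtain x0 where x0: "x0 \<in> Xs" "m0 = msg x0" by (auto simp: Ss_def)
  have "(\<Sum>m\<in>{m\<in>profiles Ms. m i = mi}.
           qq m * (EU A u i (\<lambda>j. sig j (m j)) - EU A u i ((\<lambda>j. sig j (m j))(i := point_mass a'))))
      = (\<Sum>m\<in>{m\<in>profiles Ms. m i = mi}. qq m * g (act m))" (is "?S = _")
    using EU_diff[OF a'] by (simp add: g_def)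
  also have "\<dots> = (\<Sum>m\<in>{m\<in>Ss. m i = mi}. qq m * g (act m))"
    using finite_Ms Ss_sub
    by (intro sum.mono_neutral_right) (auto simp: qq_def)
  also have "\<dots> = (\<Sum>m\<in>{m\<in>Ss. m i = mi}. (1 / real (card Ss)) * g (act m))"
    by (intro sum.cong) (auto simp: qq_def)
  also have "\<dots> = (1 / real (card Ss)) * (\<Sum>m\<in>{m\<in>Ss. m i = mi}. g (act m))"
    by (simp add: sum_distrib_left)
  also have "{m\<in>Ss. m i = mi} = msg ` {x\<in>Xs. msg x i = msg x0 i}"
    using x0 m0 by (auto simp: Ss_def)
  also have "(\<Sum>m\<in>msg ` {x\<in>Xs. msg x i = msg x0 i}. g (act m))
      = (\<Sum>x\<in>{x\<in>Xs. msg x i = msg x0 i}. g (act (msg x)))"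
    using msg_inj by (intro sum.reindex_cong[of msg]) (auto intro: inj_on_subset)
  also have "\<dots> = (\<Sum>x\<in>{x\<in>Xs. msg x i = msg x0 i}. g (tok (tx x)))"
    by (intro sum.cong) (auto simp: act_msg)
  finally have "?S = (1 / real (card Ss)) * (\<Sum>x\<in>{x\<in>Xs. msg x i = msg x0 i}. g (tok (tx x)))" .
  then show ?thesis using core_nonneg[OF x0(1) a'] unfolding g_def by simp
qed

lemma exists_msg: "p a \<noteq> 0 \<Longrightarrow> \<exists>m\<in>Ss. act m = a"
proof -
  assume "p a \<noteq> 0"
  then have "a \<in> set L" by (rule suppL)
  then obtain t0 where t0: "t0 < K" "L ! t0 = a" using lenL by (auto simp: in_set_conv_nth)
  define x where "x = (\<lambda>l::'n. if l = undefined then t0 else 0)"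
  have x: "x \<in> Xs" using t0 Kpos by (simp add: x_def Xs_def)
  have "tx x = t0" using t0 by (simp add: tx_def x_def)
  then have "act (msg x) = a" using act_msg[OF x] t0 by (simp add: tok_def)
  then show ?thesis using x by (auto simp: Ss_def)
qed

lemma sum_eta:
  assumes supp: "mu a \<noteq> 0 \<Longrightarrow> p a \<noteq> 0"
  shows "(\<Sum>m\<in>{m\<in>Ss. act m = a}. eta mu m) = mu a"
proof (cases "{m\<in>Ss. act m = a} = {}")
  case True
  then have "mu a = 0" using supp exists_msg by blast
  then show ?thesis using True by (metis sum.empty)
next
  case False
  have fin': "finite {m\<in>Ss. act m = a}" using finite_Ss by simp
  then have c: "card {m\<in>Ss. act m = a} > 0" using False by (simp add: card_gt_0_iff)
  have "(\<Sum>m\<in>{m\<in>Ss. act m = a}. eta mu m) = (\<Sum>m\<in>{m\<in>Ss. act m = a}. mu a / real (card {m\<in>Ss. act m = a}))"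
    by (intro sum.cong) (auto simp: eta_def)
  also have "\<dots> = mu a" using c by simp
  finally show ?thesis .
qed

lemma compose_eta:
  assumes supp: "\<And>a. mu a \<noteq> 0 \<Longrightarrow> p a \<noteq> 0"
  shows "Defs.compose Ms (eta mu) sig a = mu a"
proof -
  have "Defs.compose Ms (eta mu) sig a = (\<Sum>m\<in>profiles Ms. eta mu m * (if a = act m then 1 else 0))"
  proof -
    have pp: "(\<Prod>i\<in>UNIV. sig i (m i) (a i)) = (if a = act m then 1 else 0)" for m
      using prod_point_mass[of "act m" a] by (simp add: sig_def act_def)
    show ?thesis unfolding Defs.compose_def by (intro sum.cong refl) (simp only: pp)
  qed
  also have "\<dots> = (\<Sum>m\<in>{m\<in>Ss. act m = a}. eta mu m * (if a = act m then 1 else 0))"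
    using finite_Ms Ss_sub by (intro sum.mono_neutral_right) (auto simp: eta_def)
  also have "\<dots> = (\<Sum>m\<in>{m\<in>Ss. act m = a}. eta mu m)" by (intro sum.cong) auto
  also have "\<dots> = mu a" using sum_eta supp by blast
  finally show ?thesis .
qed

lemma eta_Delta:
  assumes mu: "mu \<in> Delta (profiles A)" and supp: "\<And>a. mu a \<noteq> 0 \<Longrightarrow> p a \<noteq> 0"
  shows "eta mu \<in> Delta (profiles Ms)"
proof -
  have nn: "eta mu m \<ge> 0" for m
    using mu act_prof[of m] by (auto simp: eta_def Delta_def)
  have out: "m \<notin> profiles Ms \<Longrightarrow> eta mu m = 0" for m using Ss_sub by (auto simp: eta_def)
  have "sum (eta mu) (profiles Ms) = sum (eta mu) Ss"
    using finite_Ms Ss_sub by (intro sum.mono_neutral_right) (auto simp: eta_def)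
  also have "\<dots> = (\<Sum>a\<in>profiles A. \<Sum>m\<in>{m\<in>Ss. act m = a}. eta mu m)"
    using finite_Ss finite_profiles[of A, OF fin] act_prof
    by (intro sum.group[symmetric]) auto
  also have "\<dots> = (\<Sum>a\<in>profiles A. mu a)" using sum_eta supp by simp
  also have "\<dots> = 1" using mu by (simp add: Delta_def)
  finally show ?thesis using nn out by (simp add: Delta_def)
qed

lemma sum_ind: "finite P \<Longrightarrow> m0 \<in> P \<Longrightarrow> (\<Sum>m\<in>P. q m * (if m = m0 then 1 else 0)) = (q m0 :: real)"
  by (subst sum.mono_neutral_right[of P "{m0}"]) auto

lemma DeltaD_eq:
  assumes e: "\<forall>m. m \<notin> Ss \<longrightarrow> e m = 0"
  shows "DeltaD Ms e FF = {q'\<in>Delta (profiles Ms). \<forall>m\<in>profiles Ms - Ss. q' m = 0}"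
  unfolding DeltaD_def FF_def using e finite_Ms by (auto simp: sum_ind)

lemma qq_Delta: "qq \<in> Delta (profiles Ms)"
proof -
  have "sum qq (profiles Ms) = sum qq Ss"
    using finite_Ms Ss_sub by (intro sum.mono_neutral_right) (auto simp: qq_def)
  also have "\<dots> = 1" using Ss_ne finite_Ss by (simp add: qq_def)
  finally show ?thesis using Ss_sub by (auto simp: Delta_def qq_def)
qed

lemma maxent:
  assumes e: "\<forall>m. m \<notin> Ss \<longrightarrow> e m = 0"
  shows "is_maxent_belief Ms e FF qq"
proof -
  have qin: "qq \<in> DeltaD Ms e FF" unfolding DeltaD_eq[OF e] using qq_Delta by (auto simp: qq_def)
  have qdef: "qq = (\<lambda>m. if m \<in> Ss then 1 / real (card Ss) else 0)" by (simp add: qq_def fun_eq_iff)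
  show ?thesis unfolding is_maxent_belief_def
    using qin maxent_uniform[OF finite_Ms Ss_sub Ss_ne qdef] unfolding DeltaD_eq[OF e] by blast
qed

lemma main:
  "(\<forall>i. finite (Ms i)) \<and>
   (\<forall>mu \<in> Delta (profiles A). {a. mu a \<noteq> 0} \<subseteq> {a. p a \<noteq> 0} \<longrightarrow>
      (\<exists>eta F. eta \<in> Delta (profiles Ms) \<and> implemented A u Ms eta F mu))"
proof (intro conjI ballI impI)
  show "\<forall>i. finite (Ms i)" by (simp add: Ms_def)
  fix mu assume mu: "mu \<in> Delta (profiles A)" and s: "{a. mu a \<noteq> 0} \<subseteq> {a. p a \<noteq> 0}"
  then have supp: "\<And>a. mu a \<noteq> 0 \<Longrightarrow> p a \<noteq> 0" by auto
  have e: "\<forall>m. m \<notin> Ss \<longrightarrow> eta mu m = 0" by (simp add: eta_def)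
  have sigD: "\<forall>i. \<forall>mi\<in>Ms i. sig i mi \<in> Delta (A i)"
    using point_mass_Delta[OF fin] by (simp add: sig_def dec_def tok_A)
  have "implemented A u Ms (eta mu) FF mu"
    unfolding implemented_def
    using sigD maxent[OF e] obed compose_eta[OF supp]
    by (intro exI[of _ sig] exI[of _ qq]) (auto simp: fun_eq_iff)
  then show "\<exists>eta F. eta \<in> Delta (profiles Ms) \<and> implemented A u Ms eta F mu"
    using eta_Delta[OF mu supp] by blast
qed

end



lemma sum_list_concat_rep:
  "sum_list (map h (concat (map (\<lambda>a. replicate (k a) a) as))) = sum_list (map (\<lambda>a. real (k a) * (h a :: real)) as)"
  by (induction as) (auto simp: sum_list_replicate)

lemma set_concat_rep:
  "set (concat (map (\<lambda>a. replicate (k a) a) as)) = {a\<in>set as. (k a :: nat) > 0}"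
  by (induction as) auto

lemma length_concat_rep:
  "length (concat (map (\<lambda>a. replicate (k a) a) as)) = sum_list (map k as)"
  by (induction as) auto

theorem lemma1:
  fixes A :: "'n::finite \<Rightarrow> 'a set"
    and u :: "'n \<Rightarrow> ('n \<Rightarrow> 'a) \<Rightarrow> real"
    and p :: "('n \<Rightarrow> 'a) \<Rightarrow> real"
  assumes fin: "\<forall>i. finite (A i)"
    and ce: "correlated_eq A u p"
    and rat: "\<forall>a. p a \<in> \<rat>"
  shows "\<exists>M :: 'n \<Rightarrow> nat set. (\<forall>i. finite (M i)) \<and>
           (\<forall>mu \<in> Delta (profiles A). {a. mu a \<noteq> 0} \<subseteq> {a. p a \<noteq> 0} \<longrightarrow>
              (\<exists>eta F. eta \<in> Delta (profiles M) \<and> implemented A u M eta F mu))"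
proof -
  have pD: "p \<in> Delta (profiles A)" using ce by (simp add: correlated_eq_def)
  have fP: "finite (profiles A)" using fin finite_profiles[of A] by blast
  have "\<forall>a\<in>profiles A. p a \<in> \<rat> \<and> p a \<ge> 0" using rat pD by (auto simp: Delta_def)
  then obtain K k where K: "K > 0" and kK: "\<forall>a\<in>profiles A. p a = real (k a) / real K"
    using common_denom[OF fP] by blast
  obtain as where as: "set as = profiles A" "distinct as" using finite_distinct_list[OF fP] by blast
  define L where "L = concat (map (\<lambda>a. replicate (k a) a) as)"
  have sumgen: "sum_list (map h L) = (\<Sum>a\<in>profiles A. real K * p a * h a)" for h :: "_ \<Rightarrow> real"
  proof -
    have "sum_list (map h L) = (\<Sum>a\<in>profiles A. real (k a) * h a)"
      unfolding L_def sum_list_concat_rep using as by (simp add: sum_list_distinct_conv_sum_set)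
    also have "\<dots> = (\<Sum>a\<in>profiles A. real K * p a * h a)"
      using kK K by (intro sum.cong) auto
    finally show ?thesis .
  qed
  have "real (length L) = real K"
  proof -
    have "real (length L) = real (sum_list (map k as))" unfolding L_def length_concat_rep ..
    also have "\<dots> = (\<Sum>a\<in>profiles A. real (k a))"
      using as by (simp add: sum_list_distinct_conv_sum_set)
    also have "\<dots> = (\<Sum>a\<in>profiles A. real K * p a)"
      using kK K by (intro sum.cong) auto
    also have "\<dots> = real K" using pD by (simp add: Delta_def sum_distrib_left[symmetric])
    finally show ?thesis .
  qed
  then have lenL: "length L = K" by simp
  have "set L = {a\<in>set as. k a > 0}" unfolding L_def by (rule set_concat_rep)
  then have setL: "set L = {a\<in>profiles A. k a > 0}" using as(1) by simp
  have "constr A u p K L"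
  proof
    show "\<And>i. finite (A i)" using fin by blast
    show "correlated_eq A u p" by (rule ce)
    show "K > 0" by (rule K)
    show "length L = K" by (rule lenL)
    show "set L \<subseteq> profiles A" using setL by auto
    show "\<And>a. a \<in> set L \<Longrightarrow> p a > 0" using setL kK K by auto
    show "\<And>a. p a \<noteq> 0 \<Longrightarrow> a \<in> set L"
    proof -
      fix a assume "p a \<noteq> 0"
      then have "a \<in> profiles A" using pD by (auto simp: Delta_def)
      then show "a \<in> set L" using setL kK \<open>p a \<noteq> 0\<close> by auto
    qed
    show "\<And>h. (\<Sum>t<K. h (L!t)) = (\<Sum>a\<in>profiles A. real K * p a * h a)"
    proof -
      fix h :: "_ \<Rightarrow> real"
      have "(\<Sum>t<K. h (L!t)) = sum_list (map h L)"
        using lenL by (simp add: sum_list_sum_nth atLeast0LessThan)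
      then show "(\<Sum>t<K. h (L!t)) = (\<Sum>a\<in>profiles A. real K * p a * h a)" using sumgen by simp
    qed
  qed
  note cm = constr.main[OF this]
  show ?thesis by (rule exI[of _ "constr.Ms K"]) (rule cm)
qed


end
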